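(* There exists a family of MDPs $(\mathcal{M}_n)_{n\ge1}$, where $\mathcal{M}_n$ has $2n+1$ states, such that $|V(\mathsf{est}_{\mathsf{MDP}}(\tau))|=2^n$ for every trace $\tau$ with $|\tau|>2$ that is observed with positive probability under some scheduler (i.e., $\Pr^\sigma(\tau)>0$ for some scheduler $\sigma$).
   Context: An MDP is a tuple $\langle S,\iota,\mathsf{Act},P,\mathsf{Z},\mathsf{obs}\rangle$: finite state set $S$, initial distribution $\iota\in\mathsf{Distr}(S)$, finite action set $\mathsf{Act}$, partial transition function $P\colon S\times\mathsf{Act}\rightharpoonup\mathsf{Distr}(S)$ (write $P(s,\alpha,s')=P(s,\alpha)(s')$), finite observation set $\mathsf{Z}$, observation function $\mathsf{obs}\colon S\to\mathsf{Distr}(\mathsf{Z})$; $\mathsf{AvAct}(s)=\{\alpha\mid P(s,\alpha)\text{ defined}\}\neq\emptyset$. A scheduler $\sigma$ maps each finite path $\pi=s_0a_0\dots s_n$ (with $\iota(s_0)>0$, $P(s_i,a_i)(s_{i+1})>0$) to a distribution on $\mathsf{AvAct}(s_n)$, and $\Pr^\sigma(\pi)=\iota(s_0)\prod_{i<n}\sigma(s_0a_0\dots s_i)(a_i)P(s_i,a_i)(s_{i+1})$; for a trace $\tau=z_0\dots z_n$, $|\tau|$ is its length, $\Pr(\tau\mid\pi)=\prod_i\mathsf{obs}(s_i)(z_i)$ if $\pi$ has $n+1$ states and $0$ otherwise, and $\Pr^\sigma(\tau)=\sum_\pi\Pr^\sigma(\pi)\Pr(\tau\mid\pi)$. Beliefs: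 $\mathsf{Bel}=\mathsf{Distr}(S)\cup\{\mathbf{0}\}$ in $\mathbb{R}^S$. $\mathsf{est}_{\mathsf{MDP}}(z)=\{b_z\}$ with $b_z(s)=\iota(s)\mathsf{obs}(s)(z)/\sum_{\hat s}\iota(\hat s)\mathsf{obs}(\hat s)(z)$ (or $\mathbf{0}$ if the denominator is $0$), $\mathsf{est}_{\mathsf{MDP}}(\tau\cdot z)=\bigcup_{\mathsf{bel}\in\mathsf{est}_{\mathsf{MDP}}(\tau)}\mathsf{est}^{\mathsf{up}}(\mathsf{bel},z)$, where $\mathsf{bel}'\in\mathsf{est}^{\mathsf{up}}(\mathsf{bel},z)$ iff there is $\varsigma\colon S\to\mathsf{Distr}(\mathsf{Act})$ with $\varsigma(s)$ supported in $\mathsf{AvAct}(s)$ and $\mathsf{bel}'(s')=\dfrac{\sum_s\mathsf{bel}(s)\sum_\alpha\varsigma(s)(\alpha)P(s,\alpha,s')\mathsf{obs}(s')(z)}{\sum_s\mathsf{bel}(s)\sum_\alpha\varsigma(s)(\alpha)\sum_{\hat s}P(s,\alpha,\hat s)\mathsf{obs}(\hat s)(z)}$ ($0/0=0$). $V(B)$ is the set of elements of $B$ that are not convex combinations of other elements of $B$. *)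

theory Defs
  imports "HOL-Analysis.Analysis"
begin

(* The partial transition function is modelled by
   an option type: trans s a = None means P(s,a) is undefined. *)
record ('s, 'a, 'z) mdp =
  St    :: "'s set"
  init  :: "'s \<Rightarrow> real"
  Act   :: "'a set"
  trans :: "'s \<Rightarrow> 'a \<Rightarrow> ('s \<Rightarrow> real) option"
  Obs   :: "'z set"
  obs   :: "'s \<Rightarrow> 'z \<Rightarrow> real"

definition distr :: "'x set \<Rightarrow> ('x \<Rightarrow> real) \<Rightarrow> bool" where
  "distr A d \<longleftrightarrow> (\<forall>x. 0 \<le> d x) \<and> (\<forall>x. x \<notin> A \<longrightarrow> d x = 0) \<and> sum d A = 1"

definition AvAct :: "('s, 'a, 'z) mdp \<Rightarrow> 's \<Rightarrow> 'a set" where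
  "AvAct M s = {a. trans M s a \<noteq> None}"

definition Ptr :: "('s, 'a, 'z) mdp \<Rightarrow> 's \<Rightarrow> 'a \<Rightarrow> 's \<Rightarrow> real" where
  "Ptr M s a s' = (case trans M s a of None \<Rightarrow> 0 | Some d \<Rightarrow> d s')"

definition is_mdp :: "('s, 'a, 'z) mdp \<Rightarrow> bool" where
  "is_mdp M \<longleftrightarrow> finite (St M) \<and> finite (Act M) \<and> finite (Obs M)
     \<and> distr (St M) (init M)
     \<and> (\<forall>s a. trans M s a \<noteq> None \<longrightarrow> s \<in> St M \<and> a \<in> Act M \<and> distr (St M) (the (trans M s a)))
     \<and> (\<forall>s \<in> St M. AvAct M s \<noteq> {})
     \<and> (\<forall>s \<in> St M. distr (Obs M) (obs M s))"

(* A finite path s0 a0 s1 ... sn is represented by the state list [s0,...,sn] and the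
   action list [a0,...,a(n-1)]. *)
definition valid_path :: "('s, 'a, 'z) mdp \<Rightarrow> 's list \<Rightarrow> 'a list \<Rightarrow> bool" where
  "valid_path M ss as \<longleftrightarrow> ss \<noteq> [] \<and> length ss = length as + 1 \<and> set ss \<subseteq> St M
     \<and> init M (hd ss) > 0
     \<and> (\<forall>i < length as. Ptr M (ss ! i) (as ! i) (ss ! (i + 1)) > 0)"

definition scheduler :: "('s, 'a, 'z) mdp \<Rightarrow> ('s list \<Rightarrow> 'a list \<Rightarrow> 'a \<Rightarrow> real) \<Rightarrow> bool" where
  "scheduler M \<sigma> \<longleftrightarrow> (\<forall>ss as. valid_path M ss as \<longrightarrow> distr (AvAct M (last ss)) (\<sigma> ss as))"

definition path_prob :: "('s, 'a, 'z) mdp \<Rightarrow> ('s list \<Rightarrow> 'a list \<Rightarrow> 'a \<Rightarrow> real)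
    \<Rightarrow> 's list \<Rightarrow> 'a list \<Rightarrow> real" where
  "path_prob M \<sigma> ss as = init M (hd ss) *
     (\<Prod>i < length as. \<sigma> (take (i + 1) ss) (take i as) (as ! i) * Ptr M (ss ! i) (as ! i) (ss ! (i + 1)))"

definition trace_given_path :: "('s, 'a, 'z) mdp \<Rightarrow> 'z list \<Rightarrow> 's list \<Rightarrow> real" where
  "trace_given_path M \<tau> ss = (if length ss = length \<tau> then (\<Prod>i < length \<tau>. obs M (ss ! i) (\<tau> ! i)) else 0)"

definition trace_prob :: "('s, 'a, 'z) mdp \<Rightarrow> ('s list \<Rightarrow> 'a list \<Rightarrow> 'a \<Rightarrow> real) \<Rightarrow> 'z list \<Rightarrow> real" where
  "trace_prob M \<sigma> \<tau> =
     (\<Sum>(ss, as) \<in> {(ss, as). valid_path M ss as \<and> length ss = length \<tau>}.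
        path_prob M \<sigma> ss as * trace_given_path M \<tau> ss)"

(* initial belief b_z (0 if the denominator vanishes, since x / 0 = 0) *)
definition bel_init :: "('s, 'a, 'z) mdp \<Rightarrow> 'z \<Rightarrow> 's \<Rightarrow> real" where
  "bel_init M z = (\<lambda>s. init M s * obs M s z / (\<Sum>s'\<in>St M. init M s' * obs M s' z))"

definition est_up :: "('s, 'a, 'z) mdp \<Rightarrow> ('s \<Rightarrow> real) \<Rightarrow> 'z \<Rightarrow> ('s \<Rightarrow> real) set" where
  "est_up M bel z = {bel'. \<exists>sch :: 's \<Rightarrow> 'a \<Rightarrow> real.
      (\<forall>s \<in> St M. distr (AvAct M s) (sch s)) \<and>
      bel' = (\<lambda>s'. (\<Sum>s\<in>St M. bel s * (\<Sum>a\<in>Act M. sch s a * Ptr M s a s' * obs M s' z))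
                 / (\<Sum>s\<in>St M. bel s * (\<Sum>a\<in>Act M. sch s a *
                        (\<Sum>s''\<in>St M. Ptr M s a s'' * obs M s'' z))))}"

(* est_MDP(z0 z1 ... zn); the empty trace is not used *)
fun est :: "('s, 'a, 'z) mdp \<Rightarrow> 'z list \<Rightarrow> ('s \<Rightarrow> real) set" where
  "est M [] = {}"
| "est M (z # zs) = fold (\<lambda>z' B. \<Union>bel\<in>B. est_up M bel z') zs {bel_init M z}"

definition convex_comb_of :: "('s \<Rightarrow> real) \<Rightarrow> ('s \<Rightarrow> real) set \<Rightarrow> bool" where
  "convex_comb_of b A \<longleftrightarrow> (\<exists>F u. finite F \<and> F \<subseteq> A \<and> (\<forall>x\<in>F. 0 \<le> u x) \<and> sum u F = 1
      \<and> b = (\<lambda>s. \<Sum>x\<in>F. u x * x s))"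

definition Vset :: "('s \<Rightarrow> real) set \<Rightarrow> ('s \<Rightarrow> real) set" where
  "Vset B = {b \<in> B. \<not> convex_comb_of b (B - {b})}"

end

theory Submission
  imports Defs
begin

definition unifD :: "nat \<Rightarrow> nat \<Rightarrow> real" where
  "unifD n s' = (if s' < 2*n then 1 / (2 * real n) else 0)"

definition trM :: "nat \<Rightarrow> nat \<Rightarrow> nat \<Rightarrow> (nat \<Rightarrow> real) option" where
  "trM n s a = (if s \<le> 2*n \<and> a \<le> 1 then Some (if s = 2*n then unifD n
      else (\<lambda>s'. if s' = 2*(s div 2) + a then 1 else 0)) else None)"

definition MM :: "nat \<Rightarrow> (nat, nat, nat) mdp" where
  "MM n = \<lparr>St = {..2*n}, init = (\<lambda>s. if s = 2*n then 1 else 0), Act = {0,1},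
     trans = trM n, Obs = {0}, obs = (\<lambda>s z. if z = 0 then 1 else 0)\<rparr>"

lemma MM_simps[simp]: "St (MM n) = {..2*n}" "init (MM n) = (\<lambda>s. if s = 2*n then 1 else 0)"
  "Act (MM n) = {0,1}" "trans (MM n) = trM n" "Obs (MM n) = {0}"
  "obs (MM n) = (\<lambda>s z. if z = 0 then 1 else 0)"
  by (simp_all add: MM_def)

lemma Ptr_MM: "Ptr (MM n) s a s' = (if s \<le> 2*n \<and> a \<le> 1 then (if s = 2*n then unifD n s'
      else if s' = 2*(s div 2) + a then 1 else 0) else 0)"
  by (simp add: Ptr_def trM_def)

lemma AvAct_MM: "AvAct (MM n) s = (if s \<le> 2*n then {0,1} else {})"
  by (auto simp: AvAct_def trM_def)

lemma sum_unif: "n \<ge> 1 \<Longrightarrow> sum (unifD n) {..2*n} = 1"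
proof -
  assume n: "n \<ge> 1"
  have "sum (unifD n) {..2*n} = sum (unifD n) {..<2*n}"
    by (rule sum.mono_neutral_right) (auto simp: unifD_def)
  also have "\<dots> = 1" using n by (simp add: unifD_def)
  finally show ?thesis .
qed

lemma sum_Ptr: assumes "n \<ge> 1" "s \<le> 2*n" "a \<le> 1"
  shows "(\<Sum>s''\<in>{..2*n}. Ptr (MM n) s a s'') = 1"
proof (cases "s = 2*n")
  case True then show ?thesis using assms sum_unif[OF assms(1)] by (simp add: Ptr_MM)
next
  case False
  then have "2*(s div 2) + a \<le> 2*n" using assms by linarith
  then show ?thesis using assms False by (simp add: Ptr_MM)
qed

lemma distr_trans: assumes "n \<ge> 1" "trans (MM n) s a \<noteq> None"
  shows "s \<in> St (MM n) \<and> a \<in> Act (MM n) \<and> distr (St (MM n)) (the (trans (MM n) s a))"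
proof -
  have sa: "s \<le> 2*n" "a \<le> 1" using assms by (auto simp: trM_def split: if_splits)
  have "the (trans (MM n) s a) = Ptr (MM n) s a" using sa by (auto simp: Ptr_MM trM_def)
  moreover have "distr {..2*n} (Ptr (MM n) s a)"
    unfolding distr_def using sum_Ptr[OF assms(1) sa] sa
    by (auto simp: Ptr_MM unifD_def)
  ultimately show ?thesis using sa by auto
qed

lemma is_mdp_MM: "n \<ge> 1 \<Longrightarrow> is_mdp (MM n)"
  unfolding is_mdp_def
  using distr_trans by (auto simp: distr_def AvAct_MM)

definition NN :: "nat \<Rightarrow> (nat \<Rightarrow> real) \<Rightarrow> (nat \<Rightarrow> nat \<Rightarrow> real) \<Rightarrow> nat \<Rightarrow> real" where
  "NN n bel sch s' = bel (2*n) * unifD n s' + (if s' < 2*n then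
      bel (2*(s' div 2)) * sch (2*(s' div 2)) (s' mod 2)
      + bel (2*(s' div 2)+1) * sch (2*(s' div 2)+1) (s' mod 2) else 0)"

lemma inner_eq: assumes "s < 2*n"
  shows "(\<Sum>a\<in>{0,1}. sch s a * Ptr (MM n) s a s') = (if s div 2 = s' div 2 then sch s (s' mod 2) else 0)"
proof -
  have "(\<Sum>a\<in>{0,1}. sch s a * Ptr (MM n) s a s') =
     sch s 0 * (if s' = 2*(s div 2) then 1 else 0) + sch s 1 * (if s' = 2*(s div 2) + 1 then 1 else 0)"
    using assms by (simp add: Ptr_MM)
  also have "\<dots> = (if s div 2 = s' div 2 then sch s (s' mod 2) else 0)"
  proof (cases "s div 2 = s' div 2")
    case True
    then show ?thesis
    proof (cases "s' mod 2 = 0")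
      case True
      then have "s' = 2*(s div 2)" using \<open>s div 2 = s' div 2\<close> by presburger
      then show ?thesis using True by simp
    next
      case False
      then have "s' = 2*(s div 2) + 1" using \<open>s div 2 = s' div 2\<close> by presburger
      then show ?thesis using False by simp
    qed
  next
    case False
    then have "s' \<noteq> 2*(s div 2)" "s' \<noteq> 2*(s div 2) + 1" by auto
    then show ?thesis using False by simp
  qed
  finally show ?thesis .
qed

lemma pairset: "{s \<in> {..<2*n}. s div 2 = j} = (if j < n then {2*j, 2*j+1::nat} else {})"
proof -
  have "\<And>x::nat. x div 2 = j \<longleftrightarrow> x = 2*j \<or> x = 2*j+1" by presburger
  then show ?thesis by auto
qed

lemma numer_eq: assumes "distr {0,1} (sch (2*n))"
  shows "(\<Sum>s\<in>{..2*n}. bel s * (\<Sum>a\<in>{0,1}. sch s a * Ptr (MM n) s a s')) = NN n bel sch s'"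
proof -
  have s1: "sch (2*n) 0 + sch (2*n) 1 = 1" using assms by (simp add: distr_def)
  have "{..2*n} = insert (2*n) {..<2*n}" by auto
  then have "(\<Sum>s\<in>{..2*n}. bel s * (\<Sum>a\<in>{0,1}. sch s a * Ptr (MM n) s a s'))
     = bel (2*n) * (\<Sum>a\<in>{0,1}. sch (2*n) a * Ptr (MM n) (2*n) a s')
       + (\<Sum>s\<in>{..<2*n}. bel s * (\<Sum>a\<in>{0,1}. sch s a * Ptr (MM n) s a s'))"
    by simp
  also have "bel (2*n) * (\<Sum>a\<in>{0,1}. sch (2*n) a * Ptr (MM n) (2*n) a s') = bel (2*n) * unifD n s'"
  proof -
    have e: "(\<Sum>a\<in>{0,1}. sch (2*n) a * Ptr (MM n) (2*n) a s') = (sch (2*n) 0 + sch (2*n) 1) * unifD n s'"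
      by (simp add: Ptr_MM algebra_simps)
    show ?thesis unfolding e s1 by simp
  qed
  also have "(\<Sum>s\<in>{..<2*n}. bel s * (\<Sum>a\<in>{0,1}. sch s a * Ptr (MM n) s a s'))
      = (\<Sum>s\<in>{..<2*n}. if s div 2 = s' div 2 then bel s * sch s (s' mod 2) else 0)"
  proof (rule sum.cong[OF refl])
    fix s assume "s \<in> {..<2*n}"
    then have "s < 2*n" by simp
    from inner_eq[OF this, of sch s'] show "bel s * (\<Sum>a\<in>{0,1}. sch s a * Ptr (MM n) s a s') =
      (if s div 2 = s' div 2 then bel s * sch s (s' mod 2) else 0)" by simp
  qed
  also have "\<dots> = (\<Sum>s\<in>{s \<in> {..<2*n}. s div 2 = s' div 2}. bel s * sch s (s' mod 2))"
    by (simp only: sum.inter_filter[OF finite_lessThan])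
  also have "\<dots> = (if s' < 2*n then
      bel (2*(s' div 2)) * sch (2*(s' div 2)) (s' mod 2)
      + bel (2*(s' div 2)+1) * sch (2*(s' div 2)+1) (s' mod 2) else 0)"
    unfolding pairset by auto
  finally show ?thesis unfolding NN_def .
qed

lemma denom_eq: assumes "n \<ge> 1" "\<forall>s\<in>{..2*n}. distr {0,1} (sch s)"
  shows "(\<Sum>s\<in>{..2*n}. bel s * (\<Sum>a\<in>{0,1}. sch s a * (\<Sum>s''\<in>{..2*n}. Ptr (MM n) s a s''))) = sum bel {..2*n}"
  by (rule sum.cong) (use assms in \<open>auto simp: sum_Ptr distr_def\<close>)

lemma est_up_MM: assumes "n \<ge> 1"
  shows "est_up (MM n) bel 0 = {bel'. \<exists>sch. (\<forall>s\<in>{..2*n}. distr {0,1} (sch s)) \<and>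
     bel' = (\<lambda>s'. NN n bel sch s' / sum bel {..2*n})}"
proof -
  have "\<And>sch. (\<forall>s\<in>{..2*n}. distr (AvAct (MM n) s) (sch s)) = (\<forall>s\<in>{..2*n}. distr {0,1} (sch s))"
    by (simp add: AvAct_MM)
  moreover have "\<And>sch. (\<forall>s\<in>{..2*n}. distr {0,1} (sch s)) \<Longrightarrow>
     (\<lambda>s'. (\<Sum>s\<in>St (MM n). bel s * (\<Sum>a\<in>Act (MM n). sch s a * Ptr (MM n) s a s' * obs (MM n) s' 0))
                 / (\<Sum>s\<in>St (MM n). bel s * (\<Sum>a\<in>Act (MM n). sch s a *
                        (\<Sum>s''\<in>St (MM n). Ptr (MM n) s a s'' * obs (MM n) s'' 0))))
      = (\<lambda>s'. NN n bel sch s' / sum bel {..2*n})"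
  proof -
    fix sch :: "nat \<Rightarrow> nat \<Rightarrow> real"
    assume h: "\<forall>s\<in>{..2*n}. distr {0,1} (sch s)"
    show "?thesis sch"
      using numer_eq[of sch n bel] denom_eq[OF assms h, of bel] h
      by (simp del: insert_iff)
  qed
  ultimately show ?thesis unfolding est_up_def MM_simps by (auto simp del: MM_simps)
qed

definition CC :: "nat \<Rightarrow> (nat \<Rightarrow> real) set" where
  "CC n = {b. (\<forall>s. 0 \<le> b s) \<and> (\<forall>s. 2*n \<le> s \<longrightarrow> b s = 0) \<and> (\<forall>i<n. b (2*i) + b (2*i+1) = 1 / real n)}"

lemma sum_pairs: "(\<Sum>s<2*(n::nat). (f::nat\<Rightarrow>real) s) = (\<Sum>i<n. f (2*i) + f (2*i+1))"
proof (induction n)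
  case 0 then show ?case by simp
next
  case (Suc n)
  have "2 * Suc n = Suc (Suc (2*n))" by simp
  then show ?case using Suc by (simp add: sum.lessThan_Suc add.assoc)
qed

lemma sum_C: assumes "n \<ge> 1" "b \<in> CC n" shows "sum b {..2*n} = 1"
proof -
  have "sum b {..2*n} = sum b {..<2*n}"
    by (rule sum.mono_neutral_right) (use assms in \<open>auto simp: CC_def\<close>)
  also have "\<dots> = (\<Sum>i<n. 1 / real n)" unfolding sum_pairs
    by (rule sum.cong) (use assms in \<open>auto simp: CC_def\<close>)
  also have "\<dots> = 1" using assms by simp
  finally show ?thesis .
qed

lemma NN_C: assumes "b \<in> CC n"
  shows "NN n b sch s' = (if s' < 2*n then
      b (2*(s' div 2)) * sch (2*(s' div 2)) (s' mod 2)
      + b (2*(s' div 2)+1) * sch (2*(s' div 2)+1) (s' mod 2) else 0)"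
  using assms by (simp add: NN_def CC_def)

lemma est_up_C_sub: assumes "n \<ge> 1" "b \<in> CC n"
  shows "est_up (MM n) b 0 \<subseteq> CC n"
proof
  fix b' assume "b' \<in> est_up (MM n) b 0"
  then obtain sch where sch: "\<forall>s\<in>{..2*n}. distr {0,1} (sch s)"
    and b': "b' = (\<lambda>s'. NN n b sch s' / sum b {..2*n})"
    unfolding est_up_MM[OF assms(1)] by blast
  have b'2: "b' = (\<lambda>s'. NN n b sch s')" using b' sum_C[OF assms] by simp
  have bnn: "\<And>s. 0 \<le> b s" using assms(2) by (simp add: CC_def)
  have schnn: "\<And>s a. s \<le> 2*n \<Longrightarrow> 0 \<le> sch s a" using sch by (simp add: distr_def)
  have schsum: "\<And>s. s \<le> 2*n \<Longrightarrow> sch s 0 + sch s 1 = 1" using sch by (simp add: distr_def)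
  have "0 \<le> b' s" for s
  proof (cases "s < 2*n")
    case True
    then have "2*(s div 2) + 1 \<le> 2*n" by linarith
    then show ?thesis using True unfolding b'2 NN_C[OF assms(2)]
      by (auto intro!: add_nonneg_nonneg mult_nonneg_nonneg bnn schnn)
  qed (simp add: b'2 NN_C[OF assms(2)])
  moreover have "\<forall>s. 2*n \<le> s \<longrightarrow> b' s = 0" by (simp add: b'2 NN_C[OF assms(2)])
  moreover have "b' (2*i) + b' (2*i+1) = 1 / real n" if i: "i < n" for i
  proof -
    have d1: "(2*i+1) div 2 = i" "(2*i+1) mod 2 = 1" by auto
    have "b' (2*i) + b' (2*i+1) = b (2*i) * (sch (2*i) 0 + sch (2*i) 1) + b (2*i+1) * (sch (2*i+1) 0 + sch (2*i+1) 1)"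
      using i unfolding b'2 NN_C[OF assms(2)] d1 by (simp add: algebra_simps)
    also have "\<dots> = b (2*i) + b (2*i+1)" using i schsum[of "2*i"] schsum[of "2*i+1"] by simp
    also have "\<dots> = 1 / real n" using i assms(2) by (simp add: CC_def)
    finally show ?thesis .
  qed
  ultimately show "b' \<in> CC n" unfolding CC_def by blast
qed

lemma est_up_C_sup: assumes "n \<ge> 1" "b \<in> CC n"
  shows "CC n \<subseteq> est_up (MM n) b 0"
proof
  fix c assume c: "c \<in> CC n"
  define sch where "sch = (\<lambda>(s::nat) (a::nat). if s < 2*n then (if a = 0 then real n * c (2*(s div 2))
      else if a = 1 then real n * c (2*(s div 2)+1) else 0) else if a = 0 then 1 else (0::real))"
  have cnn: "\<And>s. 0 \<le> c s" using c by (simp add: CC_def)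
  have cpair: "\<And>i. i < n \<Longrightarrow> c (2*i) + c (2*i+1) = 1 / real n" using c by (simp add: CC_def)
  have bpair: "\<And>i. i < n \<Longrightarrow> b (2*i) + b (2*i+1) = 1 / real n" using assms(2) by (simp add: CC_def)
  have "distr {0,1} (sch s)" if "s \<in> {..2*n}" for s
  proof (cases "s < 2*n")
    case True
    then have i: "s div 2 < n" by linarith
    have "real n * c (2*(s div 2)) + real n * c (2*(s div 2)+1) = real n * (c (2*(s div 2)) + c (2*(s div 2)+1))"
      by (simp only: distrib_left)
    also have "\<dots> = 1" using cpair[OF i] assms(1) by simp
    finally have "real n * c (2*(s div 2)) + real n * c (2*(s div 2)+1) = 1" .
    then show ?thesis using True unfolding distr_def sch_def by (auto intro!: mult_nonneg_nonneg cnn)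
  next
    case False
    then show ?thesis unfolding distr_def sch_def by auto
  qed
  moreover have "c = (\<lambda>s'. NN n b sch s' / sum b {..2*n})"
  proof
    fix s'
    show "c s' = NN n b sch s' / sum b {..2*n}"
    proof (cases "s' < 2*n")
      case True
      define j where "j = s' div 2"
      have j: "j < n" using True j_def by linarith
      have s2: "2*j < 2*n" "2*j+1 < 2*n" using j by auto
      have d: "(2*j) div 2 = j" "(2*j+1) div 2 = j" by auto
      have "sch (2*j) (s' mod 2) = real n * c s'" "sch (2*j+1) (s' mod 2) = real n * c s'"
      proof -
        have "s' = 2*j + s' mod 2" "s' mod 2 = 0 \<or> s' mod 2 = 1" using j_def by auto
        then show "sch (2*j) (s' mod 2) = real n * c s'" "sch (2*j+1) (s' mod 2) = real n * c s'"
          unfolding sch_def using s2 d by auto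
      qed
      then have "NN n b sch s' = (b (2*j) + b (2*j+1)) * (real n * c s')"
        using True unfolding NN_C[OF assms(2)] j_def[symmetric] by (simp add: algebra_simps)
      also have "\<dots> = c s'" using bpair[OF j] assms(1) by simp
      finally show ?thesis using sum_C[OF assms] by simp
    next
      case False
      then show ?thesis using c unfolding NN_C[OF assms(2)] CC_def by simp
    qed
  qed
  ultimately show "c \<in> est_up (MM n) b 0" unfolding est_up_MM[OF assms(1)] by blast
qed

lemma est_up_C: "n \<ge> 1 \<Longrightarrow> b \<in> CC n \<Longrightarrow> est_up (MM n) b 0 = CC n"
  using est_up_C_sub est_up_C_sup by blast

lemma bel_init_MM: "bel_init (MM n) 0 = init (MM n)"
proof -
  have "(\<Sum>s'\<in>{..2*n}. (if s' = 2*n then 1 else 0) * (1::real)) = 1" by simp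
  then show ?thesis unfolding bel_init_def by (auto simp del: sum.delta)
qed

lemma unif_C: "n \<ge> 1 \<Longrightarrow> unifD n \<in> CC n"
  unfolding CC_def unifD_def by auto

lemma est_up_init: assumes "n \<ge> 1"
  shows "est_up (MM n) (init (MM n)) 0 = {unifD n}"
proof -
  let ?b = "init (MM n)"
  have sb: "sum ?b {..2*n} = 1" by simp
  have NNi: "NN n ?b sch = unifD n" for sch
  proof -
    have a: "\<And>x. x < 2*n \<Longrightarrow> 2*(x div 2) \<noteq> 2*n \<and> 2*(x div 2)+1 \<noteq> 2*n" by presburger
    have b: "\<And>x. x div 2 = n \<longrightarrow> \<not> x < 2 * n" by presburger
    show ?thesis by (rule ext) (simp add: NN_def a b)
  qed
  define sch0 where "sch0 = (\<lambda>(s::nat) (a::nat). if a = 0 then 1 else (0::real))"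
  have "\<forall>s\<in>{..2*n}. distr {0,1} (sch0 s)" unfolding sch0_def distr_def by auto
  then show ?thesis unfolding est_up_MM[OF assms] sb NNi by auto
qed

lemma est_MM: assumes "n \<ge> 1" "m \<ge> 2"
  shows "est (MM n) (0 # replicate m 0) = CC n"
proof -
  define H where "H = (\<lambda>B. \<Union>bel\<in>B. est_up (MM n) bel (0::nat))"
  have HC: "H (CC n) = CC n" unfolding H_def using est_up_C[OF assms(1)] unif_C[OF assms(1)] by auto
  have H2: "H (H {init (MM n)}) = CC n"
  proof -
    have "H {init (MM n)} = {unifD n}" unfolding H_def by (simp del: MM_simps add: est_up_init[OF assms(1)])
    then show ?thesis unfolding H_def using est_up_C[OF assms(1) unif_C[OF assms(1)]] by (simp del: MM_simps)
  qed
  have "(H ^^ (Suc (Suc k))) {init (MM n)} = CC n" for k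
    by (induction k) (simp_all del: MM_simps add: H2 HC)
  moreover obtain k where "m = Suc (Suc k)" using assms(2) by (metis add_2_eq_Suc le_Suc_ex)
  moreover have "est (MM n) (0 # replicate m 0) = (H ^^ m) {init (MM n)}"
    unfolding H_def by (simp del: MM_simps add: bel_init_MM)
  ultimately show ?thesis by simp
qed

definition vert :: "nat \<Rightarrow> nat set \<Rightarrow> nat \<Rightarrow> real" where
  "vert n S = (\<lambda>s. if s < 2*n \<and> (even s \<longleftrightarrow> s div 2 \<in> S) then 1 / real n else 0)"

lemma vert_C: "n \<ge> 1 \<Longrightarrow> vert n S \<in> CC n"
  unfolding CC_def vert_def by auto

lemma vert_inj: assumes "n \<ge> 1" shows "inj_on (vert n) (Pow {..<n})"
proof
  fix S T assume S: "S \<in> Pow {..<n}" and T: "T \<in> Pow {..<n}" and e: "vert n S = vert n T"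
  show "S = T"
  proof (rule set_eqI)
    fix i
    show "i \<in> S \<longleftrightarrow> i \<in> T"
    proof (cases "i < n")
      case True
      have "vert n S (2*i) = vert n T (2*i)" using e by simp
      then show ?thesis using True assms unfolding vert_def by (auto split: if_splits)
    next
      case False then show ?thesis using S T by auto
    qed
  qed
qed

lemma agree: assumes "n \<ge> 1" "x \<in> CC n" "\<forall>s. vert n S s = 0 \<longrightarrow> x s = 0"
  shows "x = vert n S"
proof
  fix s
  have xp: "\<And>i. i < n \<Longrightarrow> x (2*i) + x (2*i+1) = 1 / real n" using assms(2) by (simp add: CC_def)
  have pairs: "x (2*i) = vert n S (2*i) \<and> x (2*i+1) = vert n S (2*i+1)" if i: "i < n" for i
  proof (cases "i \<in> S")
    case True
    have "vert n S (2*i+1) = 0" using True unfolding vert_def by simp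
    then have "x (2*i+1) = 0" using assms(3) by blast
    then show ?thesis using xp[OF i] True i unfolding vert_def by simp
  next
    case False
    have "vert n S (2*i) = 0" using False unfolding vert_def by simp
    then have "x (2*i) = 0" using assms(3) by blast
    then show ?thesis using xp[OF i] False i unfolding vert_def by simp
  qed
  show "x s = vert n S s"
  proof (cases "s < 2*n")
    case True
    then have i: "s div 2 < n" by linarith
    have "s = 2*(s div 2) \<or> s = 2*(s div 2) + 1" by presburger
    then show ?thesis using pairs[OF i] by metis
  next
    case False
    then show ?thesis using assms(2) unfolding CC_def vert_def by auto
  qed
qed

lemma vert_extreme: assumes "n \<ge> 1"
  shows "\<not> convex_comb_of (vert n S) (CC n - {vert n S})"
proof
  assume "convex_comb_of (vert n S) (CC n - {vert n S})"
  then obtain F u where F: "finite F" "F \<subseteq> CC n - {vert n S}" "\<forall>x\<in>F. 0 \<le> u x" "sum u F = 1"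
    and v: "vert n S = (\<lambda>s. \<Sum>x\<in>F. u x * x s)" unfolding convex_comb_of_def by blast
  have "\<exists>x\<in>F. u x > 0"
  proof (rule ccontr)
    assume "\<not> (\<exists>x\<in>F. u x > 0)"
    then have "\<forall>x\<in>F. u x = 0" using F(3) by (simp add: not_less order_antisym)
    then have "sum u F = 0" by simp
    then show False using F(4) by simp
  qed
  then obtain x0 where x0: "x0 \<in> F" "u x0 > 0" by blast
  have x0C: "x0 \<in> CC n" "x0 \<noteq> vert n S" using x0 F(2) by auto
  have "\<forall>s. vert n S s = 0 \<longrightarrow> x0 s = 0"
  proof (intro allI impI)
    fix s assume "vert n S s = 0"
    then have s0: "(\<Sum>x\<in>F. u x * x s) = 0" using fun_cong[OF v, of s] by simp
    have nn: "\<And>x. x \<in> F \<Longrightarrow> 0 \<le> u x * x s" using F(2,3) by (auto simp: CC_def)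
    have "\<forall>x\<in>F. u x * x s = 0" using iffD1[OF sum_nonneg_eq_0_iff[OF F(1), of "\<lambda>x. u x * x s"]] nn s0 by blast
    then have "u x0 * x0 s = 0" using x0(1) by blast
    then show "x0 s = 0" using x0(2) by simp
  qed
  then have "x0 = vert n S" using agree[OF assms x0C(1)] by blast
  then show False using x0C(2) by simp
qed

lemma nonvert_comb: assumes n: "n \<ge> 1" and b: "b \<in> CC n" and nv: "b \<notin> vert n ` Pow {..<n}"
  shows "convex_comb_of b (CC n - {b})"
proof -
  have bnn: "\<And>s. 0 \<le> b s" and bz: "\<And>s. 2*n \<le> s \<Longrightarrow> b s = 0"
    and bp: "\<And>i. i < n \<Longrightarrow> b (2*i) + b (2*i+1) = 1 / real n" using b by (auto simp: CC_def)
  have "\<exists>i<n. b (2*i) \<noteq> 0 \<and> b (2*i) \<noteq> 1 / real n"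
  proof (rule ccontr)
    assume "\<not> ?thesis"
    then have h: "\<And>i. i < n \<Longrightarrow> b (2*i) = 0 \<or> b (2*i) = 1 / real n" by blast
    define S where "S = {i. i < n \<and> b (2*i) = 1 / real n}"
    have "b = vert n S"
    proof
      fix s show "b s = vert n S s"
      proof (cases "s < 2*n")
        case True
        then have i: "s div 2 < n" by linarith
        have c: "s = 2*(s div 2) \<or> s = 2*(s div 2) + 1" by presburger
        have n0: "1 / real n \<noteq> 0" using n by simp
        show ?thesis
        proof (cases "s = 2*(s div 2)")
          case True
          have ev: "even s" using True by presburger
          have bs: "b s = b (2*(s div 2))" by (rule arg_cong[OF True])
          have vs: "vert n S s = (if b (2*(s div 2)) = 1/real n then 1/real n else 0)"
            unfolding vert_def S_def using ev i \<open>s < 2*n\<close> by simp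
          show ?thesis unfolding vs bs using h[OF i] by auto
        next
          case False
          then have s1: "s = 2*(s div 2) + 1" using c by blast
          have "odd s" using s1 by presburger
          moreover have "b s = 1 / real n - b (2*(s div 2))"
          proof -
            have "b s = b (2*(s div 2) + 1)" by (rule arg_cong[OF s1])
            then show ?thesis using bp[OF i] by linarith
          qed
          ultimately show ?thesis using h[OF i] i n0 \<open>s < 2*n\<close> unfolding vert_def S_def by auto
        qed
      next
        case False
        then show ?thesis using bz unfolding vert_def by auto
      qed
    qed
    moreover have "S \<in> Pow {..<n}" unfolding S_def by auto
    ultimately show False using nv by blast
  qed
  then obtain i where i: "i < n" "b (2*i) \<noteq> 0" "b (2*i) \<noteq> 1 / real n" by blast
  define p where "p = b (2*i)"
  have p0: "0 < p" using bnn i(2) p_def by (metis order_le_less)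
  have p1: "p < 1 / real n"
  proof -
    have "p \<le> 1 / real n" using bp[OF i(1)] bnn[of "2*i+1"] p_def by linarith
    then show ?thesis using i(3) p_def by simp
  qed
  define b1 where "b1 = b(2*i := 1 / real n, 2*i+1 := 0)"
  define b0 where "b0 = b(2*i := 0, 2*i+1 := 1 / real n)"
  have npos: "real n > 0" using n by simp
  have np1: "real n * p \<le> 1" using p1 npos by (simp add: field_simps)
  have np0: "0 \<le> real n * p" using p0 npos by simp
  have b1C: "b1 \<in> CC n"
  proof -
    have "b1 (2*j) + b1 (2*j+1) = 1 / real n" if "j < n" for j
      using bp[OF that] unfolding b1_def by (cases "j = i") auto
    moreover have "\<forall>s. 0 \<le> b1 s" using bnn unfolding b1_def by simp
    moreover have "\<forall>s. 2*n \<le> s \<longrightarrow> b1 s = 0" using bz i(1) unfolding b1_def by auto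
    ultimately show ?thesis unfolding CC_def by blast
  qed
  have b0C: "b0 \<in> CC n"
  proof -
    have "b0 (2*j) + b0 (2*j+1) = 1 / real n" if "j < n" for j
      using bp[OF that] unfolding b0_def by (cases "j = i") auto
    moreover have "\<forall>s. 0 \<le> b0 s" using bnn unfolding b0_def by simp
    moreover have "\<forall>s. 2*n \<le> s \<longrightarrow> b0 s = 0" using bz i(1) unfolding b0_def by auto
    ultimately show ?thesis unfolding CC_def by blast
  qed
  have b1ne: "b1 \<noteq> b" using p1 p_def unfolding b1_def by (metis fun_upd_same fun_upd_other less_irrefl n_not_Suc_n Suc_eq_plus1)
  have b0ne: "b0 \<noteq> b" using p0 p_def unfolding b0_def by (metis fun_upd_same fun_upd_other less_irrefl n_not_Suc_n Suc_eq_plus1)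
  have b10: "b1 \<noteq> b0"
  proof
    assume "b1 = b0"
    then have "b1 (2*i) = b0 (2*i)" by simp
    then show False unfolding b1_def b0_def using npos by simp
  qed
  define u where "u = (\<lambda>x. if x = b1 then real n * p else 1 - real n * p)"
  show ?thesis unfolding convex_comb_of_def
  proof (intro exI[of _ "{b1, b0}"] exI[of _ u] conjI)
    show "finite {b1, b0}" by simp
    show "{b1, b0} \<subseteq> CC n - {b}" using b1C b0C b1ne b0ne by auto
    show "\<forall>x\<in>{b1, b0}. 0 \<le> u x" using np0 np1 unfolding u_def by auto
    show "sum u {b1, b0} = 1" using b10 unfolding u_def by simp
    show "b = (\<lambda>s. \<Sum>x\<in>{b1, b0}. u x * x s)"
    proof
      fix s
      have "(\<Sum>x\<in>{b1, b0}. u x * x s) = real n * p * b1 s + (1 - real n * p) * b0 s"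
        using b10 unfolding u_def by simp
      also have "\<dots> = b s"
      proof (cases "s = 2*i")
        case True
        then show ?thesis unfolding b1_def b0_def p_def using npos by simp
      next
        case False
        show ?thesis
        proof (cases "s = 2*i+1")
          case True
          then have "b s = 1 / real n - p" using bp[OF i(1)] p_def by simp
          then show ?thesis using True unfolding b1_def b0_def using npos by (simp add: field_simps)
        next
          case False2: False
          then show ?thesis using False unfolding b1_def b0_def by (simp add: algebra_simps)
        qed
      qed
      finally show "b s = (\<Sum>x\<in>{b1, b0}. u x * x s)" by simp
    qed
  qed
qed

lemma Vset_C: assumes "n \<ge> 1" shows "Vset (CC n) = vert n ` Pow {..<n}"
proof
  show "Vset (CC n) \<subseteq> vert n ` Pow {..<n}"
    unfolding Vset_def using nonvert_comb[OF assms] by blast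
  show "vert n ` Pow {..<n} \<subseteq> Vset (CC n)"
    unfolding Vset_def using vert_C[OF assms] vert_extreme[OF assms] by blast
qed

lemma card_Vset_C: assumes "n \<ge> 1"
  shows "finite (Vset (CC n)) \<and> card (Vset (CC n)) = 2 ^ n"
  unfolding Vset_C[OF assms] using card_image[OF vert_inj[OF assms]] by (simp add: card_Pow)

lemma trace_zero: assumes "trace_prob (MM n) \<sigma> \<tau> > 0" shows "\<forall>i<length \<tau>. \<tau> ! i = 0"
proof (rule ccontr)
  assume "\<not> ?thesis"
  then obtain i where i: "i < length \<tau>" "\<tau> ! i \<noteq> 0" by blast
  have "trace_given_path (MM n) \<tau> ss = 0" for ss
    unfolding trace_given_path_def using i by (auto intro!: prod_zero)
  then have "trace_prob (MM n) \<sigma> \<tau> = 0" unfolding trace_prob_def by (simp add: case_prod_beta)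
  then show False using assms by simp
qed

theorem lemma6:
  shows "\<exists>M :: nat \<Rightarrow> (nat, nat, nat) mdp. \<forall>n \<ge> 1.
     is_mdp (M n) \<and> card (St (M n)) = 2 * n + 1 \<and>
     (\<forall>\<tau>. length \<tau> > 2 \<and> (\<exists>\<sigma>. scheduler (M n) \<sigma> \<and> trace_prob (M n) \<sigma> \<tau> > 0) \<longrightarrow>
        finite (Vset (est (M n) \<tau>)) \<and> card (Vset (est (M n) \<tau>)) = 2 ^ n)"
proof (intro exI[of _ MM] allI impI conjI)
  fix n :: nat assume n: "n \<ge> 1"
  show "is_mdp (MM n)" using is_mdp_MM[OF n] .
  show "card (St (MM n)) = 2 * n + 1" by simp
  fix \<tau> :: "nat list"
  assume h: "length \<tau> > 2 \<and> (\<exists>\<sigma>. scheduler (MM n) \<sigma> \<and> trace_prob (MM n) \<sigma> \<tau> > 0)"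
  then obtain \<sigma> where "trace_prob (MM n) \<sigma> \<tau> > 0" by blast
  then have z: "\<forall>i<length \<tau>. \<tau> ! i = 0" by (rule trace_zero)
  have "\<tau> = replicate (length \<tau>) 0" using z by (simp add: list_eq_iff_nth_eq)
  moreover obtain m where m: "length \<tau> = Suc m" "m \<ge> 2"
  proof
    show "length \<tau> = Suc (length \<tau> - 1)" "length \<tau> - 1 \<ge> 2" using h by auto
  qed
  ultimately have "\<tau> = 0 # replicate m 0" by simp
  then have "est (MM n) \<tau> = CC n" using est_MM[OF n m(2)] by simp
  then show "finite (Vset (est (MM n) \<tau>))" "card (Vset (est (MM n) \<tau>)) = 2 ^ n"
    using card_Vset_C[OF n] by auto
qed

end
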